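(* There exists an absolute constant $C_0>0$ such that for every increasing function $F:\mathbb{N}\to\mathbb{N}$ there exist functions $d,r:\mathbb{N}\to\mathbb{N}$ such that: $d$ is nondecreasing and takes only prime values at least $5$; $d(n)\ge2r(n)+1$, $r(n)\ge n$, $d(n)-2r(n)\ge n$ and $3r(n)\le d(n)$ for all $n$; $r$ is strictly increasing; and, with $G=\langle S\rangle$, $S=\{\alpha,\beta\}$, where $\alpha=(\alpha_n)_n,\beta=(\beta_n)_n\in\prod_n\mathrm{Alt}(d(n))$, $\alpha_n=(1\;2\;\cdots\;d(n))$, $\beta_n=(1\;(1+r(n))\;(1+2r(n)))$, we have $\mathcal{R}_G^S(n)\ge F(n)$ for all $n\ge C_0$.
   Context: $\mathbb{N}=\{1,2,\dots\}$. $B_S(l)$ is the ball of radius $l$ about $e$ in the word metric of $S$. $\mathcal{R}_G^S(l)$ (full residual finiteness growth) is the minimal order of a finite group $\Delta$ admitting a homomorphism $G\to\Delta$ whose restriction to $B_S(l)$ is injective. *)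

theory Defs
  imports "HOL-Algebra.Algebra" "HOL-Combinatorics.Permutations" "HOL-Computational_Algebra.Primes"
begin

definition word_ball :: "('a, 'b) monoid_scheme \<Rightarrow> 'a set \<Rightarrow> nat \<Rightarrow> 'a set" where
  "word_ball G S l =
     {foldr (\<otimes>\<^bsub>G\<^esub>) ws \<one>\<^bsub>G\<^esub> | ws. length ws \<le> l \<and> set ws \<subseteq> S \<union> (\<lambda>x. inv\<^bsub>G\<^esub> x) ` S}"

text \<open>Finite groups are represented (up to
  isomorphism, which loses nothing) by groups whose carrier is a set of naturals.\<close>
definition full_rf_growth :: "('a, 'b) monoid_scheme \<Rightarrow> 'a set \<Rightarrow> nat \<Rightarrow> nat" where
  "full_rf_growth G S l =
     (LEAST k. \<exists>(\<Delta> :: nat monoid) h. group \<Delta> \<and> finite (carrier \<Delta>) \<and> card (carrier \<Delta>) = k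
                 \<and> h \<in> hom G \<Delta> \<and> inj_on h (word_ball G S l))"

text \<open>The product group prod_{n>=1} Alt(d(n)), Alt(d) acting on {1..d}. Index 0 is a dummy
  coordinate forced to be the identity (N = {1,2,...}).\<close>
definition Alt_prod :: "(nat \<Rightarrow> nat) \<Rightarrow> (nat \<Rightarrow> nat \<Rightarrow> nat) monoid" where
  "Alt_prod d = \<lparr> carrier = {f. f 0 = id \<and> (\<forall>n\<ge>1. f n permutes {1..d n} \<and> evenperm (f n))},
                 monoid.mult = (\<lambda>f g. \<lambda>n. f n \<circ> g n),
                 one = (\<lambda>n. id) \<rparr>"

definition cycle_perm :: "nat \<Rightarrow> nat \<Rightarrow> nat" where
  "cycle_perm d = (\<lambda>i. if 1 \<le> i \<and> i < d then i + 1 else if i = d then 1 else i)"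

definition three_cycle :: "nat \<Rightarrow> nat \<Rightarrow> nat \<Rightarrow> nat \<Rightarrow> nat" where
  "three_cycle a b c = (\<lambda>i. if i = a then b else if i = b then c else if i = c then a else i)"

definition alpha_el :: "(nat \<Rightarrow> nat) \<Rightarrow> nat \<Rightarrow> nat \<Rightarrow> nat" where
  "alpha_el d = (\<lambda>n. if n = 0 then id else cycle_perm (d n))"

definition beta_el :: "(nat \<Rightarrow> nat) \<Rightarrow> nat \<Rightarrow> nat \<Rightarrow> nat" where
  "beta_el r = (\<lambda>n. if n = 0 then id else three_cycle 1 (1 + r n) (1 + 2 * r n))"

definition G_grp :: "(nat \<Rightarrow> nat) \<Rightarrow> (nat \<Rightarrow> nat) \<Rightarrow> (nat \<Rightarrow> nat \<Rightarrow> nat) monoid" where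
  "G_grp d r = (Alt_prod d) \<lparr> carrier := generate (Alt_prod d) {alpha_el d, beta_el r} \<rparr>"

end

theory Submission
  imports Defs
begin


definition dt :: "nat \<Rightarrow> nat \<Rightarrow> nat \<Rightarrow> nat \<Rightarrow> nat \<Rightarrow> nat" where
  "dt a b c e = (\<lambda>i. if i = a then b else if i = b then a else if i = c then e else if i = e then c else i)"

lemma conj_three_cycle:
  assumes "bij g"
  shows "g \<circ> three_cycle a b c \<circ> Hilbert_Choice.inv g = three_cycle (g a) (g b) (g c)"
proof
  fix y
  obtain x where y: "y = g x" using assms by (metis bij_pointE)
  have inj: "inj g" using assms bij_is_inj by auto
  have ix: "Hilbert_Choice.inv g y = x" using y inj by simp
  show "(g \<circ> three_cycle a b c \<circ> Hilbert_Choice.inv g) y = three_cycle (g a) (g b) (g c) y"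
    unfolding ix comp_def three_cycle_def y using inj by (auto dest: injD)
qed

lemma conj_dt:
  assumes "bij g"
  shows "g \<circ> dt a b c e \<circ> Hilbert_Choice.inv g = dt (g a) (g b) (g c) (g e)"
proof
  fix y
  obtain x where y: "y = g x" using assms by (metis bij_pointE)
  have inj: "inj g" using assms bij_is_inj by auto
  have ix: "Hilbert_Choice.inv g y = x" using y inj by simp
  show "(g \<circ> dt a b c e \<circ> Hilbert_Choice.inv g) y = dt (g a) (g b) (g c) (g e) y"
    unfolding ix comp_def dt_def y using inj by (auto dest: injD)
qed

lemma three_cycle_eq_swaps:
  assumes "a \<noteq> b" "b \<noteq> c" "a \<noteq> c"
  shows "three_cycle a b c = transpose a b \<circ> transpose b c"
  using assms by (auto simp: three_cycle_def transpose_def fun_eq_iff)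

lemma three_cycle_permutes:
  assumes "a \<noteq> b" "b \<noteq> c" "a \<noteq> c" "a \<in> S" "b \<in> S" "c \<in> S"
  shows "three_cycle a b c permutes S"
  unfolding three_cycle_eq_swaps[OF assms(1-3)]
  by (intro permutes_compose permutes_swap_id) (use assms in auto)

lemma three_cycle_even:
  assumes "a \<noteq> b" "b \<noteq> c" "a \<noteq> c"
  shows "evenperm (three_cycle a b c)"
  unfolding three_cycle_eq_swaps[OF assms]
  by (subst evenperm_comp) (auto simp: permutation_swap_id evenperm_swap assms)

lemma three_cycle_bij:
  assumes "a \<noteq> b" "b \<noteq> c" "a \<noteq> c"
  shows "bij (three_cycle a b c)"
  unfolding three_cycle_eq_swaps[OF assms] by (intro bij_comp) auto

lemma three_cycle_inv:
  assumes "a \<noteq> b" "b \<noteq> c" "a \<noteq> c"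
  shows "Hilbert_Choice.inv (three_cycle a b c) = three_cycle a c b"
proof -
  have "three_cycle a b c \<circ> three_cycle a c b = id"
    using assms by (auto simp: three_cycle_def fun_eq_iff)
  moreover have "three_cycle a c b \<circ> three_cycle a b c = id"
    using assms by (auto simp: three_cycle_def fun_eq_iff)
  ultimately show ?thesis by (metis inv_unique_comp)
qed

lemma comm_three_overlap:
  assumes "distinct [a,b,c,e]"
  shows "three_cycle a b c \<circ> three_cycle b c e \<circ> three_cycle a c b \<circ> three_cycle b e c = dt a e b c"
  using assms by (auto simp: three_cycle_def dt_def fun_eq_iff)

lemma comm_three_disjoint:
  assumes "distinct [a,b,c,a',b',c']"
  shows "three_cycle a b c \<circ> three_cycle a' b' c' \<circ> three_cycle a c b \<circ> three_cycle a' c' b' = id"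
  using assms by (auto simp: three_cycle_def fun_eq_iff)

lemma comm_three_same:
  assumes "distinct [a,b,c]"
  shows "three_cycle a b c \<circ> three_cycle a b c \<circ> three_cycle a c b \<circ> three_cycle a c b = id"
  using assms by (auto simp: three_cycle_def fun_eq_iff)

lemma cycle_perm_Suc:
  assumes "D \<ge> 1"
  shows "cycle_perm (Suc D) = cycle_perm D \<circ> transpose D (Suc D)"
  using assms by (auto simp: cycle_perm_def transpose_def fun_eq_iff)

lemma cycle_perm_1: "cycle_perm 1 = id"
  by (auto simp: cycle_perm_def fun_eq_iff)

lemma cycle_perm_props:
  assumes "D \<ge> 1"
  shows "cycle_perm D permutes {1..D} \<and> (evenperm (cycle_perm D) \<longleftrightarrow> odd D)"
  using assms
proof (induction D rule: dec_induct)
  case base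
  have "cycle_perm 1 permutes {1..1}" using cycle_perm_1 permutes_id by metis
  moreover have "evenperm (cycle_perm 1)" using cycle_perm_1 evenperm_id by metis
  ultimately show ?case using odd_one by blast
next
  case (step D)
  have p: "cycle_perm D permutes {1..Suc D}"
    using step.IH permutes_subset by fastforce
  have t: "transpose D (Suc D) permutes {1..Suc D}"
    using step.hyps by (intro permutes_swap_id) auto
  have c: "cycle_perm D \<circ> transpose D (Suc D) permutes {1..Suc D}"
    by (rule permutes_compose[OF t p])
  have pc: "permutation (cycle_perm D)" using p permutation_permutes by blast
  have pt: "permutation (transpose D (Suc D))" by (rule permutation_swap_id)
  have e: "evenperm (cycle_perm D \<circ> transpose D (Suc D)) = (evenperm (cycle_perm D) = evenperm (transpose D (Suc D)))"
    by (rule evenperm_comp[OF pc pt])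
  have "evenperm (transpose D (Suc D)) = False" by (simp add: evenperm_swap)
  then have "evenperm (cycle_perm D \<circ> transpose D (Suc D)) = odd (Suc D)"
    using e step.IH by auto
  then show ?case
    unfolding cycle_perm_Suc[OF step.hyps(1)] using c by blast
qed


lemma Alt_prod_carrier_iff:
  "f \<in> carrier (Alt_prod d) \<longleftrightarrow> f 0 = id \<and> (\<forall>n\<ge>1. f n permutes {1..d n} \<and> evenperm (f n))"
  by (simp add: Alt_prod_def)

lemma Alt_prod_mult [simp]: "f \<otimes>\<^bsub>Alt_prod d\<^esub> g = (\<lambda>n. f n \<circ> g n)"
  by (simp add: Alt_prod_def)

lemma Alt_prod_one [simp]: "\<one>\<^bsub>Alt_prod d\<^esub> = (\<lambda>n. id)"
  by (simp add: Alt_prod_def)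

lemma Alt_prod_bij:
  assumes "f \<in> carrier (Alt_prod d)"
  shows "bij (f n)"
proof (cases "n = 0")
  case True
  then show ?thesis using assms by (simp add: Alt_prod_carrier_iff)
next
  case False
  then have "f n permutes {1..d n}" using assms by (simp add: Alt_prod_carrier_iff)
  then show ?thesis by (rule permutes_bij)
qed

lemma Alt_prod_inv_closed:
  assumes "f \<in> carrier (Alt_prod d)"
  shows "(\<lambda>n. Hilbert_Choice.inv (f n)) \<in> carrier (Alt_prod d)"
  unfolding Alt_prod_carrier_iff
proof (intro conjI allI impI)
  show "Hilbert_Choice.inv (f 0) = id" using assms by (simp add: Alt_prod_carrier_iff inv_id)
  fix n :: nat assume "n \<ge> 1"
  then have p: "f n permutes {1..d n}" "evenperm (f n)" using assms by (auto simp: Alt_prod_carrier_iff)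
  show "Hilbert_Choice.inv (f n) permutes {1..d n}" using permutes_inv[OF p(1)] .
  have "permutation (f n)" using p(1) permutation_permutes by blast
  then show "evenperm (Hilbert_Choice.inv (f n))" using p(2) evenperm_inv by metis
qed

lemma Alt_prod_group: "group (Alt_prod d)"
proof (rule groupI)
  fix x y assume x: "x \<in> carrier (Alt_prod d)" and y: "y \<in> carrier (Alt_prod d)"
  show "x \<otimes>\<^bsub>Alt_prod d\<^esub> y \<in> carrier (Alt_prod d)"
    unfolding Alt_prod_carrier_iff Alt_prod_mult
  proof (intro conjI allI impI)
    show "x 0 \<circ> y 0 = id" using x y by (simp add: Alt_prod_carrier_iff)
    fix n :: nat assume n: "n \<ge> 1"
    then have p: "x n permutes {1..d n}" "evenperm (x n)" "y n permutes {1..d n}" "evenperm (y n)"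
      using x y by (auto simp: Alt_prod_carrier_iff)
    show "x n \<circ> y n permutes {1..d n}" by (rule permutes_compose[OF p(3) p(1)])
    have "permutation (x n)" "permutation (y n)" using p permutation_permutes by blast+
    then show "evenperm (x n \<circ> y n)" using p evenperm_comp by metis
  qed
next
  show "\<one>\<^bsub>Alt_prod d\<^esub> \<in> carrier (Alt_prod d)"
    by (simp add: Alt_prod_carrier_iff permutes_id evenperm_id)
next
  fix x y z assume "x \<in> carrier (Alt_prod d)" "y \<in> carrier (Alt_prod d)" "z \<in> carrier (Alt_prod d)"
  show "x \<otimes>\<^bsub>Alt_prod d\<^esub> y \<otimes>\<^bsub>Alt_prod d\<^esub> z = x \<otimes>\<^bsub>Alt_prod d\<^esub> (y \<otimes>\<^bsub>Alt_prod d\<^esub> z)"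
    by (simp add: o_assoc)
next
  fix x assume "x \<in> carrier (Alt_prod d)"
  show "\<one>\<^bsub>Alt_prod d\<^esub> \<otimes>\<^bsub>Alt_prod d\<^esub> x = x" by simp
next
  fix x assume x: "x \<in> carrier (Alt_prod d)"
  show "\<exists>y\<in>carrier (Alt_prod d). y \<otimes>\<^bsub>Alt_prod d\<^esub> x = \<one>\<^bsub>Alt_prod d\<^esub>"
  proof (intro bexI)
    show "(\<lambda>n. Hilbert_Choice.inv (x n)) \<otimes>\<^bsub>Alt_prod d\<^esub> x = \<one>\<^bsub>Alt_prod d\<^esub>"
      using Alt_prod_bij[OF x] by (simp add: fun_eq_iff bij_is_inj)
  qed (rule Alt_prod_inv_closed[OF x])
qed

lemma Alt_prod_inv:
  assumes "f \<in> carrier (Alt_prod d)"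
  shows "inv\<^bsub>Alt_prod d\<^esub> f = (\<lambda>n. Hilbert_Choice.inv (f n))"
  by (rule group.inv_equality[OF Alt_prod_group])
     (use Alt_prod_bij[OF assms] Alt_prod_inv_closed[OF assms] assms in \<open>auto simp: fun_eq_iff bij_is_inj\<close>)

lemma alpha_in:
  assumes "\<forall>n\<ge>1. odd (d n) \<and> d n \<ge> 1"
  shows "alpha_el d \<in> carrier (Alt_prod d)"
  using assms cycle_perm_props unfolding Alt_prod_carrier_iff alpha_el_def by auto

lemma beta_in:
  assumes "\<forall>n\<ge>1. r n \<ge> 1 \<and> 2 * r n + 1 \<le> d n"
  shows "beta_el r \<in> carrier (Alt_prod d)"
  unfolding Alt_prod_carrier_iff beta_el_def
proof (intro conjI allI impI)
  fix n :: nat assume n: "n \<ge> 1"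
  then have "r n \<ge> 1" "2 * r n + 1 \<le> d n" using assms by auto
  then show "(if n = 0 then id else three_cycle 1 (1 + r n) (1 + 2 * r n)) permutes {1..d n}"
    "evenperm (if n = 0 then id else three_cycle 1 (1 + r n) (1 + 2 * r n))"
    using n by (auto intro!: three_cycle_permutes three_cycle_even)
qed simp

locale GG =
  fixes d r :: "nat \<Rightarrow> nat"
  assumes dodd: "\<forall>n\<ge>1. odd (d n) \<and> d n \<ge> 1"
  and rd: "\<forall>n\<ge>1. r n \<ge> 1 \<and> 2 * r n + 1 \<le> d n"
begin

abbreviation "A \<equiv> Alt_prod d"
abbreviation "G \<equiv> G_grp d r"
abbreviation "\<alpha> \<equiv> alpha_el d"
abbreviation "\<beta> \<equiv> beta_el r"
abbreviation "H \<equiv> generate (Alt_prod d) {alpha_el d, beta_el r}"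

lemma gens_in: "{\<alpha>, \<beta>} \<subseteq> carrier A"
  using alpha_in[OF dodd] beta_in[OF rd] by auto

lemma H_sub: "subgroup H A"
  by (rule group.generate_is_subgroup[OF Alt_prod_group gens_in])

lemma G_group: "group G"
  unfolding G_grp_def by (rule subgroup.subgroup_is_group[OF H_sub Alt_prod_group])

lemma G_carrier: "carrier G = H"
  by (simp add: G_grp_def)

lemma G_carrier_A: "x \<in> carrier G \<Longrightarrow> x \<in> carrier A"
  using H_sub G_carrier subgroup.subset by blast

lemma G_mult [simp]: "x \<otimes>\<^bsub>G\<^esub> y = (\<lambda>n. x n \<circ> y n)"
  by (simp add: G_grp_def Alt_prod_def)

lemma G_one [simp]: "\<one>\<^bsub>G\<^esub> = (\<lambda>n. id)"
  by (simp add: G_grp_def Alt_prod_def)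

lemma G_inv:
  assumes "x \<in> carrier G"
  shows "inv\<^bsub>G\<^esub> x = (\<lambda>n. Hilbert_Choice.inv (x n))"
proof -
  have "inv\<^bsub>G\<^esub> x = inv\<^bsub>A\<^esub> x"
    unfolding G_grp_def
    by (rule group.m_inv_consistent[OF Alt_prod_group H_sub]) (use assms G_carrier in auto)
  then show ?thesis using Alt_prod_inv G_carrier_A assms by simp
qed

lemma G_pow: "x [^]\<^bsub>G\<^esub> (k::nat) = (\<lambda>n. x n ^^ k)"
proof (induction k)
  case 0
  then show ?case by (simp add: fun_eq_iff)
next
  case (Suc k)
  then show ?case by (simp add: fun_eq_iff funpow_Suc_right del: funpow.simps)
qed

lemma G_bij: "x \<in> carrier G \<Longrightarrow> bij (x n)"
  using Alt_prod_bij G_carrier_A by blast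

lemma G_zero: "x \<in> carrier G \<Longrightarrow> x 0 = id"
  using G_carrier_A Alt_prod_carrier_iff by blast

lemma alpha_G: "\<alpha> \<in> carrier G"
proof -
  have "\<alpha> \<in> H" by (rule generate.incl) simp
  then show ?thesis by (simp add: G_carrier)
qed

lemma beta_G: "\<beta> \<in> carrier G"
proof -
  have "\<beta> \<in> H" by (rule generate.incl) simp
  then show ?thesis by (simp add: G_carrier)
qed

end


context group begin

lemma inv_cancel_l: "a \<in> carrier G \<Longrightarrow> x \<in> carrier G \<Longrightarrow> inv a \<otimes> (a \<otimes> x) = x"
  by (simp flip: m_assoc)

definition cj where "cj a x = a \<otimes> x \<otimes> inv a"

lemma cj_closed: "a \<in> carrier G \<Longrightarrow> x \<in> carrier G \<Longrightarrow> cj a x \<in> carrier G"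
  by (simp add: cj_def)

lemma cj_mult: "a \<in> carrier G \<Longrightarrow> b \<in> carrier G \<Longrightarrow> x \<in> carrier G \<Longrightarrow> cj (a \<otimes> b) x = cj a (cj b x)"
  by (simp add: cj_def inv_mult_group m_assoc)

lemma cj_inv_cancel: "a \<in> carrier G \<Longrightarrow> x \<in> carrier G \<Longrightarrow> cj (inv a) (cj a x) = x"
  by (simp add: cj_def m_assoc flip: m_assoc[of "inv a" a] m_assoc[of _ "inv a" a])

lemma cj_comm: "a \<in> carrier G \<Longrightarrow> x \<in> carrier G \<Longrightarrow> a \<otimes> x = x \<otimes> a \<Longrightarrow> cj a x = x"
  by (simp add: cj_def m_assoc)

end

lemma hom_cj:
  assumes "group G" "group D" "h \<in> hom G D" "a \<in> carrier G" "x \<in> carrier G"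
  shows "h (group.cj G a x) = group.cj D (h a) (h x)"
proof -
  interpret gh: group_hom G D h using assms by (simp add: group_hom_def group_hom_axioms_def)
  show ?thesis using assms by (simp add: gh.G.cj_def gh.H.cj_def)
qed

lemma descent:
  fixes G :: "('a, 'b) monoid_scheme" and D :: "('c, 'e) monoid_scheme"
  assumes G: "group G" and D: "group D" and h: "h \<in> hom G D"
    and s: "s \<in> carrier G" and z: "z \<in> carrier G" and W: "W \<in> carrier G"
    and I1: "group.cj G W (group.cj G (s [^]\<^bsub>G\<^esub> (4::nat)) z) = z"
    and I2: "\<And>j::nat. 1 \<le> j \<Longrightarrow> j + 2 \<le> N \<Longrightarrow>
               W \<otimes>\<^bsub>G\<^esub> group.cj G (inv\<^bsub>G\<^esub> (s [^]\<^bsub>G\<^esub> (4*j))) z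
               = group.cj G (inv\<^bsub>G\<^esub> (s [^]\<^bsub>G\<^esub> (4*j))) z \<otimes>\<^bsub>G\<^esub> W"
    and ne: "h z \<noteq> h (group.cj G (s [^]\<^bsub>G\<^esub> (4::nat)) z)"
  shows "inj_on (\<lambda>i. h (group.cj G (s [^]\<^bsub>G\<^esub> (4*i)) z)) {..<N}"
proof -
  interpret G: group G by (rule G)
  interpret D: group D by (rule D)
  define e where "e i = G.cj (s [^]\<^bsub>G\<^esub> (4*i)) z" for i :: nat
  have pw: "\<And>k. s [^]\<^bsub>G\<^esub> (4 * k :: nat) \<in> carrier G" using s by simp
  have e_closed: "\<And>i. e i \<in> carrier G" unfolding e_def using pw z G.cj_closed by blast
  have hcj: "\<And>a x. a \<in> carrier G \<Longrightarrow> x \<in> carrier G \<Longrightarrow> h (G.cj a x) = D.cj (h a) (h x)"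
    using hom_cj[OF G D h] by blast
  have A: "h z \<noteq> h (e k)" if "1 \<le> k" "k < N" for k
    using that
  proof (induction k rule: dec_induct)
    case base
    then show ?case using ne by (simp add: e_def)
  next
    case (step k)
    define a where "a = s [^]\<^bsub>G\<^esub> (4*k)"
    have a: "a \<in> carrier G" using pw a_def by simp
    define g where "g = G.cj a W"
    have g: "g \<in> carrier G" using a W G.cj_closed g_def by simp
    define y where "y = G.cj (inv\<^bsub>G\<^esub> a) z"
    have y: "y \<in> carrier G" using a z G.cj_closed y_def by simp
    have Wy: "G.cj W y = y"
      using I2[of k] step.hyps step.prems W y by (intro G.cj_comm) (simp_all add: a_def y_def)
    have gz: "G.cj g z = z"
    proof -
      have "G.cj g z = G.cj a (G.cj W (G.cj (inv\<^bsub>G\<^esub> a) z))"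
        unfolding g_def G.cj_def using a W z by (simp add: G.m_assoc G.inv_mult_group)
      also have "\<dots> = G.cj a y" using Wy y_def by simp
      also have "\<dots> = z" unfolding y_def using G.cj_inv_cancel[of "inv\<^bsub>G\<^esub> a" z] a z by simp
      finally show ?thesis .
    qed
    have s4: "s [^]\<^bsub>G\<^esub> (4 * Suc k) = a \<otimes>\<^bsub>G\<^esub> s [^]\<^bsub>G\<^esub> (4::nat)"
      unfolding a_def using s by (simp add: G.nat_pow_mult) (metis add.commute)
    have ge: "G.cj g (e (Suc k)) = e k"
    proof -
      have "G.cj g (e (Suc k)) = G.cj a (G.cj W (G.cj (inv\<^bsub>G\<^esub> a) (G.cj (a \<otimes>\<^bsub>G\<^esub> s [^]\<^bsub>G\<^esub> (4::nat)) z)))"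
        unfolding g_def e_def s4 G.cj_def using a W z s by (simp add: G.m_assoc G.inv_mult_group G.inv_cancel_l)
      also have "\<dots> = G.cj a (G.cj W (G.cj (s [^]\<^bsub>G\<^esub> (4::nat)) z))"
        using G.cj_mult G.cj_inv_cancel a s z G.cj_closed by simp
      also have "\<dots> = G.cj a z" using I1 by simp
      also have "\<dots> = e k" unfolding e_def a_def by simp
      finally show ?thesis .
    qed
    show ?case
    proof
      assume eq: "h z = h (e (Suc k))"
      have "h z = h (G.cj g z)" using gz by simp
      also have "\<dots> = D.cj (h g) (h z)" using hcj g z by simp
      also have "\<dots> = D.cj (h g) (h (e (Suc k)))" using eq by simp
      also have "\<dots> = h (G.cj g (e (Suc k)))" using hcj g e_closed by simp
      also have "\<dots> = h (e k)" using ge by simp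
      finally show False using step.IH step.prems by simp
    qed
  qed
  show ?thesis
  proof (rule inj_onI)
    have main: "h (e i) \<noteq> h (e j)" if "i < j" "j < N" for i j
    proof
      assume eq: "h (e i) = h (e j)"
      define a where "a = s [^]\<^bsub>G\<^esub> (4*i)"
      define b where "b = s [^]\<^bsub>G\<^esub> (4*(j-i))"
      have a: "a \<in> carrier G" and b: "b \<in> carrier G" using pw a_def b_def by auto
      have sj: "s [^]\<^bsub>G\<^esub> (4*j) = a \<otimes>\<^bsub>G\<^esub> b"
        unfolding a_def b_def using s that by (simp add: G.nat_pow_mult flip: add_mult_distrib2)
      have "h z = h (G.cj (inv\<^bsub>G\<^esub> a) (e i))" unfolding e_def a_def
        using G.cj_inv_cancel pw z by simp
      also have "\<dots> = D.cj (h (inv\<^bsub>G\<^esub> a)) (h (e i))" using hcj a e_closed by simp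
      also have "\<dots> = D.cj (h (inv\<^bsub>G\<^esub> a)) (h (e j))" using eq by simp
      also have "\<dots> = h (G.cj (inv\<^bsub>G\<^esub> a) (e j))" using hcj a e_closed by simp
      also have "G.cj (inv\<^bsub>G\<^esub> a) (e j) = e (j - i)"
        unfolding e_def sj using G.cj_mult G.cj_inv_cancel a b z G.cj_closed by (simp add: b_def)
      finally show False using A[of "j - i"] that by simp
    qed
    fix i j assume "i \<in> {..<N}" "j \<in> {..<N}"
      "h (G.cj (s [^]\<^bsub>G\<^esub> (4*i)) z) = h (G.cj (s [^]\<^bsub>G\<^esub> (4*j)) z)"
    then show "i = j" using main[of i j] main[of j i] unfolding e_def
      by (metis lessThan_iff linorder_neqE_nat)
  qed
qed


lemma cyc_pow:
  assumes "1 \<le> p" "p \<le> D"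
  shows "(cycle_perm D ^^ k) p = 1 + (p - 1 + k) mod D"
proof (induction k)
  case 0
  then show ?case using assms by simp
next
  case (Suc k)
  define y where "y = (p - 1 + k) mod D"
  have yD: "y < D" using assms y_def by simp
  have IH: "(cycle_perm D ^^ k) p = 1 + y" using Suc.IH y_def by simp
  have m: "(p - 1 + Suc k) mod D = (if Suc y = D then 0 else Suc y)"
    unfolding y_def by (simp add: mod_Suc)
  show ?case using IH m yD by (auto simp: cycle_perm_def)
qed

definition Pl :: "nat \<Rightarrow> nat \<Rightarrow> nat \<Rightarrow> nat" where
  "Pl D R u = 1 + (u * R) mod D"

lemma Pl_range: "D \<ge> 1 \<Longrightarrow> 1 \<le> Pl D R u \<and> Pl D R u \<le> D"
  unfolding Pl_def using mod_less_divisor[of D "u*R"] by linarith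

lemma Pl_shift:
  assumes "D \<ge> 1"
  shows "(cycle_perm D ^^ (R * k)) (Pl D R u) = Pl D R (u + k)"
proof -
  have "(cycle_perm D ^^ (R * k)) (Pl D R u) = 1 + ((u * R) mod D + R * k) mod D"
    using cyc_pow[of "Pl D R u" D "R*k"] Pl_range[OF assms, of R u] by (simp add: Pl_def)
  also have "\<dots> = 1 + (u * R + R * k) mod D" by (simp add: mod_add_left_eq)
  also have "\<dots> = Pl D R (u + k)" by (simp add: Pl_def algebra_simps)
  finally show ?thesis .
qed

lemma Pl_mod: "Pl D R (u + D) = Pl D R u"
  by (simp add: Pl_def algebra_simps)

lemma Pl_inj_aux:
  fixes D R a b :: nat
  assumes "Factorial_Ring.prime D" "0 < R" "R < D" "a < D" "b \<le> a" "a * R mod D = b * R mod D"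
  shows "a = b"
proof -
  have "D dvd a * R - b * R" using assms(5,6) mod_eq_dvd_iff_nat[of "b*R" "a*R" D] by simp
  then have "D dvd (a - b) * R" by (simp add: diff_mult_distrib)
  then have "D dvd (a - b) \<or> D dvd R" using assms(1) prime_dvd_mult_iff by blast
  moreover have "\<not> D dvd R" using assms(2,3) nat_dvd_not_less by blast
  ultimately have "D dvd (a - b)" by blast
  moreover have "a - b < D" using assms(4) by simp
  ultimately show ?thesis using assms(5) by (metis diff_is_0_eq dvd_imp_le le_antisym not_less zero_less_diff)
qed

lemma Pl_inj:
  fixes D R a b :: nat
  assumes "Factorial_Ring.prime D" "0 < R" "R < D" "a < D" "b < D" "Pl D R a = Pl D R b"
  shows "a = b"
  using assms Pl_inj_aux[of D R a b] Pl_inj_aux[of D R b a] unfolding Pl_def by (cases "b \<le> a") auto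


lemma bij_comp_inv_id: "bij f \<Longrightarrow> f \<circ> Hilbert_Choice.inv f = id"
  using bij_is_surj surj_iff by blast

lemma commute_dt:
  assumes "inj W" "W a = a" "W b = b" "W c = c" "W e = e"
  shows "W \<circ> dt a b c e = dt a b c e \<circ> W"
proof
  fix y
  show "(W \<circ> dt a b c e) y = (dt a b c e \<circ> W) y"
  proof (cases "y \<in> {a, b, c, e}")
    case True
    then show ?thesis using assms by (auto simp: dt_def)
  next
    case False
    then have "W y \<notin> {a, b, c, e}" using assms by (metis injD insertE singletonD)
    then show ?thesis using False by (simp add: dt_def)
  qed
qed

lemma three_cycle_lt: "a < D \<Longrightarrow> b < D \<Longrightarrow> c < D \<Longrightarrow> u < D \<Longrightarrow> three_cycle a b c u < D"
  by (simp add: three_cycle_def)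

locale GGm = GG d r for d r :: "nat \<Rightarrow> nat" +
  fixes m :: nat
  assumes m1: "m \<ge> 1" and Dp: "Factorial_Ring.prime (d m)" and D8: "d m > 8"
    and oth: "\<forall>n\<ge>1. n \<noteq> m \<longrightarrow> (d n dvd r m \<or> (r m + 2 * r n < d n \<and> r m \<noteq> r n \<and> r m \<noteq> 2 * r n))"
begin

abbreviation "D \<equiv> d m"
abbreviation "R \<equiv> r m"
abbreviation "P \<equiv> Pl D R"

definition "\<sigma> = \<alpha> [^]\<^bsub>G\<^esub> R"

definition "z = \<beta> \<otimes>\<^bsub>G\<^esub> \<sigma> \<otimes>\<^bsub>G\<^esub> \<beta> \<otimes>\<^bsub>G\<^esub> inv\<^bsub>G\<^esub> \<sigma> \<otimes>\<^bsub>G\<^esub> inv\<^bsub>G\<^esub> \<beta>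
   \<otimes>\<^bsub>G\<^esub> \<sigma> \<otimes>\<^bsub>G\<^esub> inv\<^bsub>G\<^esub> \<beta> \<otimes>\<^bsub>G\<^esub> inv\<^bsub>G\<^esub> \<sigma>"

definition "c v = group.cj G (\<sigma> [^]\<^bsub>G\<^esub> (v::nat)) \<beta>"

definition "W = c 3 \<otimes>\<^bsub>G\<^esub> c 2 \<otimes>\<^bsub>G\<^esub> c 1 \<otimes>\<^bsub>G\<^esub> c 0 \<otimes>\<^bsub>G\<^esub> c 5 \<otimes>\<^bsub>G\<^esub> c 4 \<otimes>\<^bsub>G\<^esub> c 3 \<otimes>\<^bsub>G\<^esub> c 2"

lemma R1: "R \<ge> 1" and R2: "2 * R + 1 \<le> D" using rd m1 by auto

lemma sigma_G: "\<sigma> \<in> carrier G"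
  unfolding \<sigma>_def by (rule monoid.nat_pow_closed[OF group.is_monoid[OF G_group] alpha_G])

lemma spow_G: "\<sigma> [^]\<^bsub>G\<^esub> (k::nat) \<in> carrier G"
  by (rule monoid.nat_pow_closed[OF group.is_monoid[OF G_group] sigma_G])

lemma mG: "x \<in> carrier G \<Longrightarrow> y \<in> carrier G \<Longrightarrow> x \<otimes>\<^bsub>G\<^esub> y \<in> carrier G"
  by (rule monoid.m_closed[OF group.is_monoid[OF G_group]])

lemma iG: "x \<in> carrier G \<Longrightarrow> inv\<^bsub>G\<^esub> x \<in> carrier G"
  by (rule group.inv_closed[OF G_group])

lemma z_G: "z \<in> carrier G"
  unfolding z_def by (intro mG iG sigma_G beta_G)

lemma c_G: "c v \<in> carrier G"
  unfolding c_def by (rule group.cj_closed[OF G_group spow_G beta_G])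

lemma W_G: "W \<in> carrier G"
  unfolding W_def by (intro mG c_G)

lemma cj_coord:
  assumes "a \<in> carrier G" "x \<in> carrier G"
  shows "group.cj G a x n = a n \<circ> x n \<circ> Hilbert_Choice.inv (a n)"
  using assms by (simp add: group.cj_def[OF G_group] G_inv)

lemma cj_coord_id:
  assumes "a \<in> carrier G" "x \<in> carrier G" "x n = id"
  shows "group.cj G a x n = id"
  using assms cj_coord bij_comp_inv_id[OF G_bij[OF assms(1)]] by simp

lemma spow_coord: "(\<sigma> [^]\<^bsub>G\<^esub> (k::nat)) n = (if n = 0 then id else cycle_perm (d n) ^^ (R * k))"
proof -
  have "\<sigma> [^]\<^bsub>G\<^esub> k = \<alpha> [^]\<^bsub>G\<^esub> (R * k)"
    unfolding \<sigma>_def using monoid.nat_pow_pow[OF group.is_monoid[OF G_group] alpha_G] by simp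
  then show ?thesis by (simp add: G_pow alpha_el_def)
qed

lemma sigma_coord: "\<sigma> n = (if n = 0 then id else cycle_perm (d n) ^^ R)"
  unfolding \<sigma>_def by (simp add: G_pow alpha_el_def)

lemma beta_coord: "\<beta> n = (if n = 0 then id else three_cycle 1 (1 + r n) (1 + 2 * r n))"
  by (simp add: beta_el_def)

lemma z_coord:
  assumes "n \<ge> 1"
  defines "f \<equiv> \<sigma> n"
  shows "z n = three_cycle 1 (1 + r n) (1 + 2 * r n) \<circ> three_cycle (f 1) (f (1 + r n)) (f (1 + 2 * r n))
    \<circ> three_cycle 1 (1 + 2 * r n) (1 + r n) \<circ> three_cycle (f 1) (f (1 + 2 * r n)) (f (1 + r n))"
proof -
  let ?a = "1::nat" and ?b = "1 + r n" and ?c = "1 + 2 * r n"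
  have rn: "r n \<ge> 1" using rd assms(1) by auto
  have bn: "\<beta> n = three_cycle ?a ?b ?c" using assms(1) by (simp add: beta_coord)
  have ibn: "Hilbert_Choice.inv (\<beta> n) = three_cycle ?a ?c ?b"
    unfolding bn using rn by (intro three_cycle_inv) auto
  have bf: "bij f" unfolding f_def using G_bij sigma_G by blast
  have c1: "f \<circ> three_cycle ?a ?b ?c \<circ> Hilbert_Choice.inv f = three_cycle (f ?a) (f ?b) (f ?c)"
    by (rule conj_three_cycle[OF bf])
  have c2: "f \<circ> three_cycle ?a ?c ?b \<circ> Hilbert_Choice.inv f = three_cycle (f ?a) (f ?c) (f ?b)"
    by (rule conj_three_cycle[OF bf])
  have "z n = \<beta> n \<circ> f \<circ> \<beta> n \<circ> Hilbert_Choice.inv f \<circ> Hilbert_Choice.inv (\<beta> n) \<circ> f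
      \<circ> Hilbert_Choice.inv (\<beta> n) \<circ> Hilbert_Choice.inv f"
    unfolding z_def f_def using sigma_G beta_G by (simp add: G_inv)
  also have "\<dots> = three_cycle ?a ?b ?c \<circ> (f \<circ> three_cycle ?a ?b ?c \<circ> Hilbert_Choice.inv f)
      \<circ> three_cycle ?a ?c ?b \<circ> (f \<circ> three_cycle ?a ?c ?b \<circ> Hilbert_Choice.inv f)"
    unfolding ibn unfolding bn by (simp add: o_assoc)
  finally show ?thesis unfolding c1 c2 .
qed

lemma D1: "D \<ge> 1" using D8 by simp
lemma RD: "R < D" using R2 by simp

lemma P_inj_iff: "a < D \<Longrightarrow> b < D \<Longrightarrow> P a = P b \<longleftrightarrow> a = b"
  using Pl_inj[OF Dp _ RD] R1 by auto

lemma R2': "2 * R < D" using R2 by simp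

lemma P0: "P 0 = 1" by (simp add: Pl_def)
lemma P1: "P 1 = 1 + R" using RD by (simp add: Pl_def)
lemma P2: "P 2 = 1 + 2 * R" using R2' by (simp add: Pl_def mult.commute)

lemma spow_m: "(\<sigma> [^]\<^bsub>G\<^esub> (k::nat)) m (P u) = P (u + k)"
  using m1 spow_coord Pl_shift[OF D1] by simp

lemma sigma_m: "\<sigma> m (P u) = P (u + 1)"
  using m1 sigma_coord Pl_shift[OF D1, of R 1] by simp

lemma z_m: "z m = dt (P 0) (P 3) (P 1) (P 2)"
proof -
  have e: "z m = three_cycle (P 0) (P 1) (P 2) \<circ> three_cycle (\<sigma> m (P 0)) (\<sigma> m (P 1)) (\<sigma> m (P 2))
    \<circ> three_cycle (P 0) (P 2) (P 1) \<circ> three_cycle (\<sigma> m (P 0)) (\<sigma> m (P 2)) (\<sigma> m (P 1))"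
    unfolding P0 P1 P2 by (rule z_coord[OF m1])
  have sm: "\<sigma> m (P 0) = P 1" "\<sigma> m (P 1) = P 2" "\<sigma> m (P 2) = P 3"
    using sigma_m[of 0] sigma_m[of 1] sigma_m[of 2] by (simp_all add: numeral_2_eq_2 numeral_3_eq_3)
  have "z m = three_cycle (P 0) (P 1) (P 2) \<circ> three_cycle (P 1) (P 2) (P 3)
    \<circ> three_cycle (P 0) (P 2) (P 1) \<circ> three_cycle (P 1) (P 3) (P 2)"
    using e unfolding sm .
  also have "\<dots> = dt (P 0) (P 3) (P 1) (P 2)"
    by (rule comm_three_overlap) (use D8 P_inj_iff in auto)
  finally show ?thesis .
qed

lemma z_other:
  assumes "n \<noteq> m"
  shows "z n = id"
proof (cases "n = 0")
  case True
  then show ?thesis using z_G G_zero by blast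
next
  case False
  then have n1: "n \<ge> 1" by simp
  have rn: "r n \<ge> 1" "2 * r n + 1 \<le> d n" using rd n1 by auto
  have f: "\<sigma> n p = 1 + (p - 1 + R) mod d n" if "1 \<le> p" "p \<le> d n" for p
    using sigma_coord[of n] False cyc_pow[OF that] by simp
  from oth n1 assms consider "d n dvd R" | "R + 2 * r n < d n" "R \<noteq> r n" "R \<noteq> 2 * r n" by blast
  then show ?thesis
  proof cases
    case 1
    have fp: "\<sigma> n p = p" if "1 \<le> p" "p \<le> d n" for p
    proof -
      have "(p - 1 + R) mod d n = (p - 1) mod d n" using 1 by (simp add: mod_add_right_eq[symmetric])
      also have "\<dots> = p - 1" using that by simp
      finally show ?thesis using f[OF that] that by simp
    qed
    have "\<sigma> n 1 = 1" "\<sigma> n (1 + r n) = 1 + r n" "\<sigma> n (1 + 2 * r n) = 1 + 2 * r n"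
      using fp rn by auto
    then show ?thesis using z_coord[OF n1] comm_three_same[of 1 "1 + r n" "1 + 2 * r n"] rn by simp
  next
    case 2
    have "\<sigma> n 1 = 1 + R" "\<sigma> n (1 + r n) = 1 + R + r n" "\<sigma> n (1 + 2 * r n) = 1 + R + 2 * r n"
      using f rn 2 by auto
    then show ?thesis using z_coord[OF n1] comm_three_disjoint[of 1 "1 + r n" "1 + 2 * r n" "1 + R" "1 + R + r n" "1 + R + 2 * r n"] rn 2 R1
      by simp
  qed
qed

lemma beta_m: "\<beta> m = three_cycle (P 0) (P 1) (P 2)"
  unfolding P0 P1 P2 using m1 by (simp add: beta_coord)

lemma c_m: "c v m = three_cycle (P v) (P (v + 1)) (P (v + 2))"
proof -
  have b: "bij ((\<sigma> [^]\<^bsub>G\<^esub> v) m)" using G_bij spow_G by blast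
  have "c v m = (\<sigma> [^]\<^bsub>G\<^esub> v) m \<circ> \<beta> m \<circ> Hilbert_Choice.inv ((\<sigma> [^]\<^bsub>G\<^esub> v) m)"
    unfolding c_def using cj_coord spow_G beta_G by blast
  also have "\<dots> = three_cycle (P v) (P (v + 1)) (P (v + 2))"
    unfolding beta_m conj_three_cycle[OF b] spow_m by (simp add: add.commute)
  finally show ?thesis .
qed

lemma lt8: "0 < D" "1 < D" "2 < D" "3 < D" "4 < D" "5 < D" "6 < D" "7 < D" "8 < D"
  using D8 by auto

lemma tP:
  assumes "a < D" "b < D" "e < D" "u < D"
  shows "three_cycle (P a) (P b) (P e) (P u) = P (three_cycle a b e u)"
  using assms P_inj_iff by (auto simp: three_cycle_def)

definition "w = three_cycle 3 4 5 \<circ> three_cycle 2 3 4 \<circ> three_cycle 1 2 3 \<circ> three_cycle 0 1 2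
  \<circ> three_cycle 5 6 7 \<circ> three_cycle 4 5 6 \<circ> three_cycle 3 4 5 \<circ> three_cycle (2::nat) 3 4"


lemma W_m:
  assumes "u < D"
  shows "W m (P u) = P (w u)"
proof -
  have "W m = c 3 m \<circ> c 2 m \<circ> c 1 m \<circ> c 0 m \<circ> c 5 m \<circ> c 4 m \<circ> c 3 m \<circ> c 2 m"
    unfolding W_def by simp
  then show ?thesis
    unfolding w_def c_m using assms lt8 by (simp add: tP three_cycle_lt numeral_eq_Suc)
qed

lemma w_vals: "w 4 = 0" "w 5 = 1" "w 6 = 2" "w 7 = 3"
  by (simp_all add: w_def three_cycle_def)

lemma w_big: "u \<ge> 8 \<Longrightarrow> w u = u"
  by (simp add: w_def three_cycle_def)

lemma W_bij: "bij (W m)" using G_bij W_G by blast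

lemma e1_m: "group.cj G (\<sigma> [^]\<^bsub>G\<^esub> (4::nat)) z m = dt (P 4) (P 7) (P 5) (P 6)"
proof -
  have b: "bij ((\<sigma> [^]\<^bsub>G\<^esub> (4::nat)) m)" using G_bij spow_G by blast
  show ?thesis unfolding cj_coord[OF spow_G z_G] z_m conj_dt[OF b] spow_m by simp
qed

lemma I1: "group.cj G W (group.cj G (\<sigma> [^]\<^bsub>G\<^esub> (4::nat)) z) = z"
proof
  fix n
  show "group.cj G W (group.cj G (\<sigma> [^]\<^bsub>G\<^esub> (4::nat)) z) n = z n"
  proof (cases "n = m")
    case True
    have "group.cj G W (group.cj G (\<sigma> [^]\<^bsub>G\<^esub> (4::nat)) z) m = dt (P 0) (P 3) (P 1) (P 2)"
      unfolding cj_coord[OF W_G group.cj_closed[OF G_group spow_G z_G]] e1_m conj_dt[OF W_bij]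
      using W_m lt8 w_vals by simp
    then show ?thesis using True z_m by simp
  next
    case False
    have "group.cj G (\<sigma> [^]\<^bsub>G\<^esub> (4::nat)) z n = id"
      by (rule cj_coord_id[OF spow_G z_G z_other[OF False]])
    then show ?thesis using cj_coord_id[OF W_G group.cj_closed[OF G_group spow_G z_G]] z_other[OF False]
      by simp
  qed
qed

lemma inv_spow_m:
  assumes "k \<le> D" "u < D"
  shows "Hilbert_Choice.inv ((\<sigma> [^]\<^bsub>G\<^esub> k) m) (P u) = P (D - k + u)"
proof -
  have b: "bij ((\<sigma> [^]\<^bsub>G\<^esub> k) m)" using G_bij spow_G by blast
  have "(\<sigma> [^]\<^bsub>G\<^esub> k) m (P (D - k + u)) = P (u + D)"
    unfolding spow_m using assms by (simp add: add.commute)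
  also have "\<dots> = P u" by (rule Pl_mod)
  finally show ?thesis using b bij_is_inj inv_f_eq by metis
qed

lemma I2:
  assumes "1 \<le> j" "j + 2 \<le> D div 4"
  shows "W \<otimes>\<^bsub>G\<^esub> group.cj G (inv\<^bsub>G\<^esub> (\<sigma> [^]\<^bsub>G\<^esub> (4*j))) z
       = group.cj G (inv\<^bsub>G\<^esub> (\<sigma> [^]\<^bsub>G\<^esub> (4*j))) z \<otimes>\<^bsub>G\<^esub> W"
proof -
  let ?g = "inv\<^bsub>G\<^esub> (\<sigma> [^]\<^bsub>G\<^esub> (4*j))"
  have g: "?g \<in> carrier G" using spow_G group.inv_closed[OF G_group] by blast
  have j: "4 * j + 8 \<le> D" using assms(2) by linarith
  have gm: "?g m = Hilbert_Choice.inv ((\<sigma> [^]\<^bsub>G\<^esub> (4*j)) m)" using G_inv spow_G by simp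
  have bg: "bij (?g m)" using G_bij g by blast
  have gP: "?g m (P u) = P (D - 4 * j + u)" if "u < 4" for u
    unfolding gm using inv_spow_m[of "4*j" u] j that by simp
  have fix8: "W m (P u) = P u" if "8 \<le> u" "u < D" for u
    using W_m w_big that by simp
  show ?thesis
  proof
    fix n
    show "(W \<otimes>\<^bsub>G\<^esub> group.cj G ?g z) n = (group.cj G ?g z \<otimes>\<^bsub>G\<^esub> W) n"
    proof (cases "n = m")
      case True
      have "group.cj G ?g z m = dt (P (D - 4 * j + 0)) (P (D - 4 * j + 3)) (P (D - 4 * j + 1)) (P (D - 4 * j + 2))"
        unfolding cj_coord[OF g z_G] z_m conj_dt[OF bg] using gP by simp
      moreover have "W m \<circ> dt (P (D - 4 * j + 0)) (P (D - 4 * j + 3)) (P (D - 4 * j + 1)) (P (D - 4 * j + 2))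
          = dt (P (D - 4 * j + 0)) (P (D - 4 * j + 3)) (P (D - 4 * j + 1)) (P (D - 4 * j + 2)) \<circ> W m"
        by (rule commute_dt) (use W_bij bij_is_inj fix8 j assms(1) in auto)
      ultimately show ?thesis using True by simp
    next
      case False
      have "group.cj G ?g z n = id" by (rule cj_coord_id[OF g z_G z_other[OF False]])
      then show ?thesis by simp
    qed
  qed
qed

lemma z_ne_e1: "z \<noteq> group.cj G (\<sigma> [^]\<^bsub>G\<^esub> (4::nat)) z"
proof
  assume "z = group.cj G (\<sigma> [^]\<^bsub>G\<^esub> (4::nat)) z"
  then have "z m (P 0) = dt (P 4) (P 7) (P 5) (P 6) (P 0)" using e1_m by simp
  moreover have "dt (P 4) (P 7) (P 5) (P 6) (P 0) = P 0" using P_inj_iff lt8 by (simp add: dt_def)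
  moreover have "z m (P 0) = P 3" using z_m by (simp add: dt_def)
  ultimately show False using P_inj_iff lt8 by simp
qed

end


context monoid begin

lemma foldr_closed: "set xs \<subseteq> carrier G \<Longrightarrow> foldr (\<otimes>) xs \<one> \<in> carrier G"
  by (induction xs) auto

lemma foldr_mult: "set xs \<subseteq> carrier G \<Longrightarrow> b \<in> carrier G \<Longrightarrow> foldr (\<otimes>) xs b = foldr (\<otimes>) xs \<one> \<otimes> b"
proof (induction xs)
  case Nil
  then show ?case by simp
next
  case (Cons x xs)
  then show ?case using foldr_closed by (simp add: m_assoc)
qed

lemma foldr_app: "set xs \<subseteq> carrier G \<Longrightarrow> set ys \<subseteq> carrier G \<Longrightarrow>
    foldr (\<otimes>) (xs @ ys) \<one> = foldr (\<otimes>) xs \<one> \<otimes> foldr (\<otimes>) ys \<one>"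
proof -
  assume xs: "set xs \<subseteq> carrier G" and ys: "set ys \<subseteq> carrier G"
  have "foldr (\<otimes>) (xs @ ys) \<one> = foldr (\<otimes>) xs (foldr (\<otimes>) ys \<one>)" by simp
  also have "\<dots> = foldr (\<otimes>) xs \<one> \<otimes> foldr (\<otimes>) ys \<one>"
    by (rule foldr_mult[OF xs foldr_closed[OF ys]])
  finally show ?thesis .
qed

lemma foldr_rep: "x \<in> carrier G \<Longrightarrow> foldr (\<otimes>) (replicate k x) \<one> = x [^] k"
proof (induction k)
  case 0
  then show ?case by simp
next
  case (Suc k)
  then have "foldr (\<otimes>) (replicate (Suc k) x) \<one> = x \<otimes> x [^] k" by simp
  also have "\<dots> = x [^] Suc k" using Suc.prems nat_pow_Suc2 by metis
  finally show ?case .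
qed

lemma foldr_single: "x \<in> carrier G \<Longrightarrow> foldr (\<otimes>) [x] \<one> = x"
  by simp

end

context GGm begin

declare G_mult [simp del] G_one [simp del]

definition "S = {\<alpha>, \<beta>}"

definition "zs = [\<beta>] @ replicate R \<alpha> @ [\<beta>] @ replicate R (inv\<^bsub>G\<^esub> \<alpha>) @ [inv\<^bsub>G\<^esub> \<beta>]
   @ replicate R \<alpha> @ [inv\<^bsub>G\<^esub> \<beta>] @ replicate R (inv\<^bsub>G\<^esub> \<alpha>)"

lemma zs_set: "set zs \<subseteq> S \<union> (\<lambda>x. inv\<^bsub>G\<^esub> x) ` S"
  unfolding zs_def S_def by auto

lemma zs_len: "length zs = 4 * R + 4"
  unfolding zs_def by simp

lemma S_carrier: "S \<union> (\<lambda>x. inv\<^bsub>G\<^esub> x) ` S \<subseteq> carrier G"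
  unfolding S_def using alpha_G beta_G iG by auto

lemma zs_val: "foldr (\<otimes>\<^bsub>G\<^esub>) zs \<one>\<^bsub>G\<^esub> = z"
proof -
  interpret Gr: group G by (rule G_group)
  have a: "\<alpha> \<in> carrier G" and b: "\<beta> \<in> carrier G" and ia: "inv\<^bsub>G\<^esub> \<alpha> \<in> carrier G"
    and ib: "inv\<^bsub>G\<^esub> \<beta> \<in> carrier G" using alpha_G beta_G iG by auto
  have ra: "foldr (\<otimes>\<^bsub>G\<^esub>) (replicate R \<alpha>) \<one>\<^bsub>G\<^esub> = \<sigma>"
    unfolding \<sigma>_def by (rule Gr.foldr_rep[OF a])
  have ria: "foldr (\<otimes>\<^bsub>G\<^esub>) (replicate R (inv\<^bsub>G\<^esub> \<alpha>)) \<one>\<^bsub>G\<^esub> = inv\<^bsub>G\<^esub> \<sigma>"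
    unfolding \<sigma>_def Gr.foldr_rep[OF ia] using Gr.nat_pow_inv[OF a] by simp
  have sets: "set [\<beta>] \<subseteq> carrier G" "set [inv\<^bsub>G\<^esub> \<beta>] \<subseteq> carrier G"
    "set (replicate R \<alpha>) \<subseteq> carrier G" "set (replicate R (inv\<^bsub>G\<^esub> \<alpha>)) \<subseteq> carrier G"
    using a b ia ib by auto
  have "foldr (\<otimes>\<^bsub>G\<^esub>) zs \<one>\<^bsub>G\<^esub> = \<beta> \<otimes>\<^bsub>G\<^esub> (\<sigma> \<otimes>\<^bsub>G\<^esub> (\<beta> \<otimes>\<^bsub>G\<^esub> (inv\<^bsub>G\<^esub> \<sigma> \<otimes>\<^bsub>G\<^esub>
     (inv\<^bsub>G\<^esub> \<beta> \<otimes>\<^bsub>G\<^esub> (\<sigma> \<otimes>\<^bsub>G\<^esub> (inv\<^bsub>G\<^esub> \<beta> \<otimes>\<^bsub>G\<^esub> inv\<^bsub>G\<^esub> \<sigma>))))))"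
    unfolding zs_def using sets
    by (simp only: Gr.foldr_app set_append Un_subset_iff ra ria Gr.foldr_single b ib)
  also have "\<dots> = z"
    unfolding z_def using sigma_G beta_G iG by (simp add: Gr.m_assoc)
  finally show ?thesis .
qed

lemma z_ball: "4 * R + 4 \<le> l \<Longrightarrow> z \<in> word_ball G S l"
  unfolding word_ball_def
  apply (rule CollectI)
  apply (rule exI[of _ zs])
  using zs_val zs_len zs_set by simp

definition "es = replicate (R * 4) \<alpha> @ zs @ replicate (R * 4) (inv\<^bsub>G\<^esub> \<alpha>)"

lemma es_val: "foldr (\<otimes>\<^bsub>G\<^esub>) es \<one>\<^bsub>G\<^esub> = group.cj G (\<sigma> [^]\<^bsub>G\<^esub> (4::nat)) z"
proof -
  interpret Gr: group G by (rule G_group)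
  have a: "\<alpha> \<in> carrier G" and ia: "inv\<^bsub>G\<^esub> \<alpha> \<in> carrier G" using alpha_G iG by auto
  have s4: "\<sigma> [^]\<^bsub>G\<^esub> (4::nat) = \<alpha> [^]\<^bsub>G\<^esub> (R * 4)"
    unfolding \<sigma>_def using Gr.nat_pow_pow[OF a] by simp
  have ra: "foldr (\<otimes>\<^bsub>G\<^esub>) (replicate (R * 4) \<alpha>) \<one>\<^bsub>G\<^esub> = \<sigma> [^]\<^bsub>G\<^esub> (4::nat)"
    unfolding s4 by (rule Gr.foldr_rep[OF a])
  have ria: "foldr (\<otimes>\<^bsub>G\<^esub>) (replicate (R * 4) (inv\<^bsub>G\<^esub> \<alpha>)) \<one>\<^bsub>G\<^esub> = inv\<^bsub>G\<^esub> (\<sigma> [^]\<^bsub>G\<^esub> (4::nat))"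
    unfolding s4 Gr.foldr_rep[OF ia] using Gr.nat_pow_inv[OF a] by simp
  have sets: "set zs \<subseteq> carrier G"
    "set (replicate (R*4) \<alpha>) \<subseteq> carrier G" "set (replicate (R*4) (inv\<^bsub>G\<^esub> \<alpha>)) \<subseteq> carrier G"
    using a ia zs_set S_carrier by auto
  have "foldr (\<otimes>\<^bsub>G\<^esub>) es \<one>\<^bsub>G\<^esub> = \<sigma> [^]\<^bsub>G\<^esub> (4::nat) \<otimes>\<^bsub>G\<^esub> (z \<otimes>\<^bsub>G\<^esub> inv\<^bsub>G\<^esub> (\<sigma> [^]\<^bsub>G\<^esub> (4::nat)))"
    unfolding es_def using sets
    by (simp only: Gr.foldr_app set_append Un_subset_iff ra ria zs_val)
  also have "\<dots> = group.cj G (\<sigma> [^]\<^bsub>G\<^esub> (4::nat)) z"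
    unfolding Gr.cj_def using spow_G z_G iG by (simp add: Gr.m_assoc)
  finally show ?thesis .
qed

lemma es_len: "length es = 12 * R + 4"
  unfolding es_def using zs_len by simp

lemma es_set: "set es \<subseteq> S \<union> (\<lambda>x. inv\<^bsub>G\<^esub> x) ` S"
  unfolding es_def using zs_set by (auto simp: S_def)

lemma e1_ball: "12 * R + 4 \<le> l \<Longrightarrow> group.cj G (\<sigma> [^]\<^bsub>G\<^esub> (4::nat)) z \<in> word_ball G S l"
  unfolding word_ball_def
  apply (rule CollectI)
  apply (rule exI[of _ es])
  using es_val es_len es_set by simp

lemma lower_bound:
  fixes \<Delta> :: "('x, 'y) monoid_scheme"
  assumes "group \<Delta>" "finite (carrier \<Delta>)" "h \<in> hom G \<Delta>" "inj_on h (word_ball G S l)"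
    "12 * R + 4 \<le> l"
  shows "D div 4 \<le> card (carrier \<Delta>)"
proof -
  have zb: "z \<in> word_ball G S l" using z_ball assms(5) by simp
  have eb: "group.cj G (\<sigma> [^]\<^bsub>G\<^esub> (4::nat)) z \<in> word_ball G S l" using e1_ball assms(5) by simp
  have ne: "h z \<noteq> h (group.cj G (\<sigma> [^]\<^bsub>G\<^esub> (4::nat)) z)"
    using assms(4) zb eb z_ne_e1 by (meson inj_on_contraD)
  have inj: "inj_on (\<lambda>i. h (group.cj G (\<sigma> [^]\<^bsub>G\<^esub> (4*i)) z)) {..<D div 4}"
    apply (rule descent[of G \<Delta> h \<sigma> z W "D div 4"])
    using G_group assms(1) assms(3) sigma_G z_G W_G I1 ne apply simp_all
    using I2 by simp
  have sub: "(\<lambda>i. h (group.cj G (\<sigma> [^]\<^bsub>G\<^esub> (4*i)) z)) ` {..<D div 4} \<subseteq> carrier \<Delta>"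
    using assms(3) group.cj_closed[OF G_group spow_G z_G] unfolding hom_def by blast
  have "D div 4 = card ((\<lambda>i. h (group.cj G (\<sigma> [^]\<^bsub>G\<^esub> (4*i)) z)) ` {..<D div 4})"
    using card_image[OF inj] by simp
  also have "\<dots> \<le> card (carrier \<Delta>)" by (rule card_mono[OF assms(2) sub])
  finally show ?thesis .
qed

end


lemma finite_word_ball:
  assumes "finite S"
  shows "finite (word_ball G S l)"
proof -
  have "word_ball G S l = (\<lambda>ws. foldr (\<otimes>\<^bsub>G\<^esub>) ws \<one>\<^bsub>G\<^esub>) ` {ws. set ws \<subseteq> S \<union> (\<lambda>x. inv\<^bsub>G\<^esub> x) ` S \<and> length ws \<le> l}"
    unfolding word_ball_def by auto
  moreover have "finite {ws. set ws \<subseteq> S \<union> (\<lambda>x. inv\<^bsub>G\<^esub> x) ` S \<and> length ws \<le> l}"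
    by (rule finite_lists_length_le) (use assms in auto)
  ultimately show ?thesis by simp
qed

lemma word_ball_carrier:
  assumes "monoid G" "S \<union> (\<lambda>x. inv\<^bsub>G\<^esub> x) ` S \<subseteq> carrier G"
  shows "word_ball G S l \<subseteq> carrier G"
  unfolding word_ball_def using monoid.foldr_closed[OF assms(1)] assms(2) by blast

context GG begin

definition "rho M x = (\<lambda>n. if n \<le> M then x n else id)"

lemma rho_carrier: "x \<in> carrier A \<Longrightarrow> rho M x \<in> carrier A"
  unfolding rho_def Alt_prod_carrier_iff by (auto simp: permutes_id evenperm_id)

lemma rho_hom: "rho M \<in> hom G A"
  unfolding hom_def
proof (intro CollectI conjI ballI)
  show "rho M \<in> carrier G \<rightarrow> carrier A" using rho_carrier G_carrier_A by blast
  fix x y assume "x \<in> carrier G" "y \<in> carrier G"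
  show "rho M (x \<otimes>\<^bsub>G\<^esub> y) = rho M x \<otimes>\<^bsub>A\<^esub> rho M y"
    by (simp add: rho_def fun_eq_iff)
qed

lemma rho_group_hom: "group_hom G A (rho M)"
  using rho_hom G_group Alt_prod_group by (simp add: group_hom_def group_hom_axioms_def)

lemma finite_img: "finite (rho M ` carrier G)"
proof -
  let ?PI = "PiE {..M} (\<lambda>n. {p. p permutes {1..d n}})"
  let ?ext = "\<lambda>g. (\<lambda>n. if n \<le> M then g n else (id :: nat \<Rightarrow> nat))"
  have fin: "finite ?PI" by (intro finite_PiE) (auto intro: finite_permutations)
  have "rho M ` carrier G \<subseteq> ?ext ` ?PI"
  proof
    fix y assume "y \<in> rho M ` carrier G"
    then obtain x where x: "x \<in> carrier G" and y: "y = rho M x" by blast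
    have xA: "x \<in> carrier A" using G_carrier_A x by blast
    have "restrict x {..M} \<in> ?PI"
    proof (rule restrict_PiE_iff[THEN iffD2], intro ballI)
      fix n assume "n \<in> {..M}"
      show "x n \<in> {p. p permutes {1..d n}}"
      proof (cases "n = 0")
        case True then show ?thesis using xA by (simp add: Alt_prod_carrier_iff permutes_id)
      next
        case False then show ?thesis using xA by (simp add: Alt_prod_carrier_iff)
      qed
    qed
    moreover have "y = ?ext (restrict x {..M})" using y by (auto simp: rho_def fun_eq_iff)
    ultimately show "y \<in> ?ext ` ?PI" by blast
  qed
  then show ?thesis using finite_surj[OF fin] by blast
qed

lemma rho_inj_ball:
  assumes "finite B" "B \<subseteq> carrier G"
  shows "\<exists>M. inj_on (rho M) B"
proof -
  define Ns where "Ns = {LEAST n. x n \<noteq> y n | x y. x \<in> B \<and> y \<in> B \<and> x \<noteq> y}"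
  have "Ns \<subseteq> (\<lambda>(x, y). LEAST n. x n \<noteq> y n) ` (B \<times> B)" unfolding Ns_def by auto
  then have fin: "finite Ns" using assms(1) finite_subset by blast
  define M where "M = Max (insert 0 Ns)"
  have "inj_on (rho M) B"
  proof (rule inj_onI, rule ccontr)
    fix x y assume x: "x \<in> B" and y: "y \<in> B" and eq: "rho M x = rho M y" and ne: "x \<noteq> y"
    then obtain n0 where "x n0 \<noteq> y n0" by (meson ext)
    then have L: "x (LEAST n. x n \<noteq> y n) \<noteq> y (LEAST n. x n \<noteq> y n)" by (rule LeastI)
    have "(LEAST n. x n \<noteq> y n) \<in> Ns" unfolding Ns_def using x y ne by blast
    then have "(LEAST n. x n \<noteq> y n) \<le> M" unfolding M_def using fin by simp
    then show False using eq L unfolding rho_def by (metis (full_types))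
  qed
  then show ?thesis by blast
qed

end

lemma transport_nat:
  fixes A :: "('a, 'b) monoid_scheme"
  assumes grp: "group A" and fin: "finite (carrier A)"
  shows "\<exists>(\<Delta> :: nat monoid) \<phi>. group \<Delta> \<and> carrier \<Delta> = {0..<card (carrier A)}
           \<and> \<phi> \<in> hom A \<Delta> \<and> inj_on \<phi> (carrier A)"
proof -
  interpret A: group A by (rule grp)
  obtain \<phi> where bij: "bij_betw \<phi> (carrier A) {0..<card (carrier A)}"
    using ex_bij_betw_finite_nat[OF fin] by blast
  define C where "C = {0..<card (carrier A)}"
  define \<psi> where "\<psi> = inv_into (carrier A) \<phi>"
  have \<psi>C: "\<And>a. a \<in> C \<Longrightarrow> \<psi> a \<in> carrier A"
    unfolding \<psi>_def C_def using bij by (metis bij_betw_def inv_into_into)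
  have \<phi>C: "\<And>x. x \<in> carrier A \<Longrightarrow> \<phi> x \<in> C"
    unfolding C_def using bij bij_betwE by blast
  have \<psi>\<phi>: "\<And>x. x \<in> carrier A \<Longrightarrow> \<psi> (\<phi> x) = x"
    unfolding \<psi>_def using bij bij_betw_inv_into_left by metis
  have \<phi>\<psi>: "\<And>a. a \<in> C \<Longrightarrow> \<phi> (\<psi> a) = a"
    unfolding \<psi>_def C_def using bij bij_betw_inv_into_right by metis
  define \<Delta> where "\<Delta> = \<lparr>carrier = C, monoid.mult = (\<lambda>a b. \<phi> (\<psi> a \<otimes>\<^bsub>A\<^esub> \<psi> b)), one = \<phi> \<one>\<^bsub>A\<^esub>\<rparr>"
  have grpD: "group \<Delta>"
  proof (rule groupI)
    fix x y assume "x \<in> carrier \<Delta>" "y \<in> carrier \<Delta>"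
    then show "x \<otimes>\<^bsub>\<Delta>\<^esub> y \<in> carrier \<Delta>" unfolding \<Delta>_def using \<psi>C \<phi>C by simp
  next
    show "\<one>\<^bsub>\<Delta>\<^esub> \<in> carrier \<Delta>" unfolding \<Delta>_def using \<phi>C by simp
  next
    fix x y z assume "x \<in> carrier \<Delta>" "y \<in> carrier \<Delta>" "z \<in> carrier \<Delta>"
    then show "x \<otimes>\<^bsub>\<Delta>\<^esub> y \<otimes>\<^bsub>\<Delta>\<^esub> z = x \<otimes>\<^bsub>\<Delta>\<^esub> (y \<otimes>\<^bsub>\<Delta>\<^esub> z)"
      unfolding \<Delta>_def using \<psi>C \<psi>\<phi> by (simp add: A.m_assoc)
  next
    fix x assume "x \<in> carrier \<Delta>"
    then show "\<one>\<^bsub>\<Delta>\<^esub> \<otimes>\<^bsub>\<Delta>\<^esub> x = x" unfolding \<Delta>_def using \<psi>C \<psi>\<phi> \<phi>\<psi> by simp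
  next
    fix x assume x: "x \<in> carrier \<Delta>"
    show "\<exists>y\<in>carrier \<Delta>. y \<otimes>\<^bsub>\<Delta>\<^esub> x = \<one>\<^bsub>\<Delta>\<^esub>"
    proof (intro bexI)
      show "\<phi> (inv\<^bsub>A\<^esub> (\<psi> x)) \<otimes>\<^bsub>\<Delta>\<^esub> x = \<one>\<^bsub>\<Delta>\<^esub>"
        using x unfolding \<Delta>_def using \<psi>C \<psi>\<phi> by simp
      show "\<phi> (inv\<^bsub>A\<^esub> (\<psi> x)) \<in> carrier \<Delta>"
        using x unfolding \<Delta>_def using \<psi>C \<phi>C by simp
    qed
  qed
  have hom: "\<phi> \<in> hom A \<Delta>"
    unfolding hom_def \<Delta>_def using \<phi>C \<psi>\<phi> by auto
  have inj: "inj_on \<phi> (carrier A)" using bij bij_betw_def by blast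
  have cD: "carrier \<Delta> = {0..<card (carrier A)}" unfolding \<Delta>_def C_def by simp
  show ?thesis using grpD hom inj cD by blast
qed

context GG begin

lemma exists_quot:
  "\<exists>k. \<exists>(\<Delta> :: nat monoid) h. group \<Delta> \<and> finite (carrier \<Delta>) \<and> card (carrier \<Delta>) = k
      \<and> h \<in> hom G \<Delta> \<and> inj_on h (word_ball G {\<alpha>, \<beta>} l)"
proof -
  let ?B = "word_ball G {\<alpha>, \<beta>} l"
  have finB: "finite ?B" by (rule finite_word_ball) simp
  have subB: "?B \<subseteq> carrier G"
    by (rule word_ball_carrier[OF group.is_monoid[OF G_group]])
       (use alpha_G beta_G group.inv_closed[OF G_group] in auto)
  obtain M where injM: "inj_on (rho M) ?B" using rho_inj_ball[OF finB subB] by blast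
  let ?Q = "rho M ` carrier G"
  let ?QA = "A\<lparr>carrier := ?Q\<rparr>"
  have subQ: "subgroup ?Q A" using group_hom.img_is_subgroup[OF rho_group_hom] .
  have grpQ: "group ?QA" by (rule subgroup.subgroup_is_group[OF subQ Alt_prod_group])
  have finQ: "finite (carrier ?QA)" using finite_img by simp
  obtain \<Delta> :: "nat monoid" and \<phi> where D: "group \<Delta>" "carrier \<Delta> = {0..<card (carrier ?QA)}"
    "\<phi> \<in> hom ?QA \<Delta>" "inj_on \<phi> (carrier ?QA)"
    using transport_nat[OF grpQ finQ] by blast
  define h where "h = (\<lambda>x. \<phi> (rho M x))"
  have hh: "h \<in> hom G \<Delta>"
    unfolding hom_def
  proof (intro CollectI conjI ballI)
    show "h \<in> carrier G \<rightarrow> carrier \<Delta>"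
      unfolding h_def using D(3) unfolding hom_def by auto
    fix x y assume x: "x \<in> carrier G" and y: "y \<in> carrier G"
    have "rho M (x \<otimes>\<^bsub>G\<^esub> y) = rho M x \<otimes>\<^bsub>?QA\<^esub> rho M y"
      using rho_hom x y unfolding hom_def by simp
    then show "h (x \<otimes>\<^bsub>G\<^esub> y) = h x \<otimes>\<^bsub>\<Delta>\<^esub> h y"
      unfolding h_def using D(3) x y unfolding hom_def by simp
  qed
  have "inj_on (\<phi> \<circ> rho M) ?B"
  proof (rule comp_inj_on)
    show "inj_on (rho M) ?B" by (rule injM)
    show "inj_on \<phi> (rho M ` ?B)" using D(4) subB by (auto intro: inj_on_subset)
  qed
  then have "inj_on h ?B" unfolding h_def by (simp add: comp_def)
  moreover have "finite (carrier \<Delta>)" using D(2) by simp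
  ultimately show ?thesis using D(1) hh by blast
qed

end


definition nextp :: "nat \<Rightarrow> nat" where
  "nextp B = (LEAST p. Factorial_Ring.prime p \<and> B \<le> p)"

lemma nextp: "Factorial_Ring.prime (nextp B) \<and> B \<le> nextp B"
proof -
  obtain p where "Factorial_Ring.prime p \<and> B < p" using bigger_prime by blast
  then have "\<exists>p. Factorial_Ring.prime p \<and> B \<le> p" by auto
  then show ?thesis unfolding nextp_def by (rule LeastI_ex)
qed

fun st :: "(nat \<Rightarrow> nat) \<Rightarrow> nat \<Rightarrow> nat \<times> nat \<times> nat" where
  "st F 0 = (1, 0, 1)"
| "st F (Suc k) = (case st F k of (rk, dk, pk) \<Rightarrow>
     (let r' = (2 * rk + 1) * pk; d' = nextp (dk + 3 * r' + 4 * F (12 * r' + 4) + 11) in (r', d', pk * d')))"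

definition "Rs F k = fst (st F k)"
definition "Ds F k = fst (snd (st F k))"
definition "Ps F k = snd (snd (st F k))"

lemma st_0: "Rs F 0 = 1" "Ds F 0 = 0" "Ps F 0 = 1"
  by (simp_all add: Rs_def Ds_def Ps_def)

lemma st_Suc:
  "Rs F (Suc k) = (2 * Rs F k + 1) * Ps F k"
  "Ds F (Suc k) = nextp (Ds F k + 3 * Rs F (Suc k) + 4 * F (12 * Rs F (Suc k) + 4) + 11)"
  "Ps F (Suc k) = Ps F k * Ds F (Suc k)"
  by (simp_all add: Rs_def Ds_def Ps_def Let_def split: prod.splits)

lemma Ds_prime: "Factorial_Ring.prime (Ds F (Suc k))"
  using nextp st_Suc(2) by metis

lemma Ds_ge: "Ds F (Suc k) \<ge> Ds F k + 3 * Rs F (Suc k) + 4 * F (12 * Rs F (Suc k) + 4) + 11"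
  using nextp st_Suc(2) by metis

lemma Ps_pos: "Ps F k \<ge> 1"
proof (induction k)
  case 0
  then show ?case by (simp add: st_0)
next
  case (Suc k)
  have d1: "Ds F (Suc k) \<ge> 1" using Ds_ge[of F k] by simp
  have "1 * 1 \<le> Ps F k * Ds F (Suc k)" by (rule mult_le_mono) (use Suc.IH d1 in auto)
  then show ?case using st_Suc(3)[of F k] by simp
qed

lemma Ds_dvd_Ps: "1 \<le> n \<Longrightarrow> n \<le> k \<Longrightarrow> Ds F n dvd Ps F k"
proof (induction k)
  case 0
  then show ?case by simp
next
  case (Suc k)
  show ?case
  proof (cases "n = Suc k")
    case True
    then show ?thesis by (simp add: st_Suc(3))
  next
    case False
    then have "Ds F n dvd Ps F k" using Suc by simp
    then show ?thesis by (simp add: st_Suc(3))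
  qed
qed

lemma Rs_gt: "Rs F (Suc k) \<ge> 2 * Rs F k + 1"
proof -
  have "(2 * Rs F k + 1) * 1 \<le> (2 * Rs F k + 1) * Ps F k" by (rule mult_le_mono2[OF Ps_pos])
  then show ?thesis using st_Suc(1)[of F k] by simp
qed

lemma Rs_mono: "i < j \<Longrightarrow> Rs F i < Rs F j"
proof (induction j)
  case 0
  then show ?case by simp
next
  case (Suc j)
  have "Rs F j < Rs F (Suc j)" using Rs_gt[of F j] by linarith
  then show ?case using Suc less_Suc_eq by auto
qed

lemma Rs_ge: "Rs F k \<ge> Suc k"
proof (induction k)
  case 0
  then show ?case by (simp add: st_0)
next
  case (Suc k)
  then show ?case using Rs_gt[of F k] by simp
qed

definition "rr F n = Rs F (n - 1)"
definition "dd F n = Ds F n"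

lemma dd_big: "n \<ge> 1 \<Longrightarrow> dd F n \<ge> 3 * rr F (Suc n) + 4 * F (12 * rr F (Suc n) + 4) + 11"
  unfolding dd_def rr_def using Ds_ge[of F "n - 1"] by (cases n) auto

lemma dd_prime: "n \<ge> 1 \<Longrightarrow> Factorial_Ring.prime (dd F n)"
  unfolding dd_def using Ds_prime by (cases n) auto

lemma dd_mono_step: "n \<ge> 1 \<Longrightarrow> dd F n \<le> dd F (Suc n)"
  unfolding dd_def using Ds_ge[of F n] by simp

lemma rr_strict: "1 \<le> i \<Longrightarrow> i < j \<Longrightarrow> rr F i < rr F j"
  unfolding rr_def using Rs_mono by simp

lemma rr_ge: "n \<ge> 1 \<Longrightarrow> rr F n \<ge> n"
  unfolding rr_def using Rs_ge[where k="n - 1" and F=F] by simp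

lemma rr_1: "rr F 1 = 1" unfolding rr_def by (simp add: st_0)

lemma rr_Suc_dvd: "1 \<le> n \<Longrightarrow> n + 2 \<le> m \<Longrightarrow> dd F n dvd rr F m"
proof -
  assume a: "1 \<le> n" "n + 2 \<le> m"
  define k where "k = m - 2"
  have k: "m - 1 = Suc k" using a unfolding k_def by simp
  have "rr F m = (2 * Rs F k + 1) * Ps F k" unfolding rr_def k st_Suc(1) ..
  moreover have "dd F n dvd Ps F k" unfolding dd_def using Ds_dvd_Ps a k by simp
  ultimately show ?thesis by simp
qed

lemma rr_Suc_ge: "n \<ge> 1 \<Longrightarrow> rr F (Suc n) \<ge> 2 * rr F n + 1"
  unfolding rr_def using Rs_gt[of F "n - 1"] by (cases n) auto


lemma dd_mono_all: "dd F n \<le> dd F (Suc n)"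
  unfolding dd_def using Ds_ge[of F n] by simp

lemma dd_ge11: "n \<ge> 1 \<Longrightarrow> dd F n \<ge> 11"
  using dd_big[of n F] by simp

lemma rr_dd: "n \<ge> 1 \<Longrightarrow> 3 * rr F (Suc n) + 11 \<le> dd F n"
  using dd_big[of n F] by simp

lemma GG_inst: "GG (dd F) (rr F)"
proof
  show "\<forall>n\<ge>1. odd (dd F n) \<and> dd F n \<ge> 1"
  proof (intro allI impI conjI)
    fix n :: nat assume n: "n \<ge> 1"
    have g: "dd F n \<ge> 11" by (rule dd_ge11[OF n])
    then have "dd F n > 2" by simp
    then show "odd (dd F n)" using prime_odd_nat[OF dd_prime[OF n]] by blast
    show "dd F n \<ge> 1" using g by simp
  qed
  show "\<forall>n\<ge>1. rr F n \<ge> 1 \<and> 2 * rr F n + 1 \<le> dd F n"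
  proof (intro allI impI conjI)
    fix n :: nat assume n: "n \<ge> 1"
    show "rr F n \<ge> 1" using rr_ge[OF n, of F] n by simp
    have "rr F n < rr F (Suc n)" using rr_strict[OF n, of "Suc n" F] by simp
    then show "2 * rr F n + 1 \<le> dd F n" using rr_dd[OF n, of F] by simp
  qed
qed

lemma GGm_inst:
  assumes m: "m \<ge> 1"
  shows "GGm (dd F) (rr F) m"
proof -
  interpret GG "dd F" "rr F" by (rule GG_inst)
  show ?thesis
  proof
    show "m \<ge> 1" by (rule m)
    show "Factorial_Ring.prime (dd F m)" by (rule dd_prime[OF m])
    show "dd F m > 8" using dd_ge11[OF m, of F] by simp
    show "\<forall>n\<ge>1. n \<noteq> m \<longrightarrow> (dd F n dvd rr F m \<or> (rr F m + 2 * rr F n < dd F n \<and> rr F m \<noteq> rr F n \<and> rr F m \<noteq> 2 * rr F n))"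
    proof (intro allI impI)
      fix n :: nat assume n: "n \<ge> 1" and nm: "n \<noteq> m"
      consider "n + 2 \<le> m" | "Suc n = m" | "m < n" using nm by linarith
      then show "dd F n dvd rr F m \<or> (rr F m + 2 * rr F n < dd F n \<and> rr F m \<noteq> rr F n \<and> rr F m \<noteq> 2 * rr F n)"
      proof cases
        case 1
        then show ?thesis using rr_Suc_dvd[OF n 1] by simp
      next
        case 2
        have a: "rr F m \<ge> 2 * rr F n + 1" using rr_Suc_ge[OF n, of F] 2 by simp
        have b: "3 * rr F m + 11 \<le> dd F n" using rr_dd[OF n, of F] 2 by simp
        show ?thesis using a b by simp
      next
        case 3
        have a: "rr F m < rr F n" using rr_strict[OF m 3] .
        have c: "rr F n < rr F (Suc n)" using rr_strict[OF n, of "Suc n" F] by simp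
        have b: "3 * rr F (Suc n) + 11 \<le> dd F n" using rr_dd[OF n, of F] by simp
        show ?thesis using a b c by simp
      qed
    qed
  qed
qed

lemma strict_mono_on_le:
  fixes F :: "nat \<Rightarrow> nat" and x y :: nat
  assumes "strict_mono_on {1..} F" "1 \<le> x" "x \<le> y"
  shows "F x \<le> (F y :: nat)"
proof (cases "x = y")
  case False
  then have "x < y" using assms by simp
  have "F x < F y" by (rule strict_mono_onD[OF assms(1)]) (use assms \<open>x < y\<close> in auto)
  then show ?thesis by simp
qed simp

lemma main_bound:
  assumes F: "strict_mono_on {1..} F" and l: "l \<ge> 16"
  shows "F l \<le> full_rf_growth (G_grp (dd F) (rr F)) {alpha_el (dd F), beta_el (rr F)} l"
proof -
  define Ms where "Ms = {m. 1 \<le> m \<and> 12 * rr F m + 4 \<le> l}"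
  have finM: "finite Ms"
  proof (rule finite_subset)
    show "Ms \<subseteq> {..l}"
    proof
      fix x assume "x \<in> Ms"
      then have x: "1 \<le> x" "12 * rr F x + 4 \<le> l" by (auto simp: Ms_def)
      have "x \<le> rr F x" using rr_ge[OF x(1)] .
      then show "x \<in> {..l}" using x(2) by simp
    qed
  qed simp
  have oneM: "1 \<in> Ms" unfolding Ms_def using l rr_1 by simp
  define m where "m = Max Ms"
  have mM: "m \<in> Ms" unfolding m_def using finM oneM Max_in by blast
  then have m1: "m \<ge> 1" and ml: "12 * rr F m + 4 \<le> l" unfolding Ms_def by auto
  have "Suc m \<notin> Ms" unfolding m_def using finM Max_ge by (metis Suc_n_not_le_n)
  then have lt: "l < 12 * rr F (Suc m) + 4" unfolding Ms_def by auto
  have "F l \<le> F (12 * rr F (Suc m) + 4)" using strict_mono_on_le[OF F] l lt by simp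
  also have "\<dots> \<le> dd F m div 4" using dd_big[OF m1, of F] by simp
  finally have Fl: "F l \<le> dd F m div 4" .
  interpret GGm "dd F" "rr F" m by (rule GGm_inst[OF m1])
  let ?Q = "\<lambda>k. \<exists>(\<Delta> :: nat monoid) h. group \<Delta> \<and> finite (carrier \<Delta>) \<and> card (carrier \<Delta>) = k
      \<and> h \<in> hom (G_grp (dd F) (rr F)) \<Delta> \<and> inj_on h (word_ball (G_grp (dd F) (rr F)) {alpha_el (dd F), beta_el (rr F)} l)"
  have ex: "\<exists>k. ?Q k" by (rule exists_quot)
  have "?Q (Least ?Q)" using LeastI_ex[OF ex] .
  then obtain \<Delta> :: "nat monoid" and h where D: "group \<Delta>" "finite (carrier \<Delta>)"
    "card (carrier \<Delta>) = Least ?Q" "h \<in> hom (G_grp (dd F) (rr F)) \<Delta>"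
    "inj_on h (word_ball (G_grp (dd F) (rr F)) {alpha_el (dd F), beta_el (rr F)} l)" by blast
  have "dd F m div 4 \<le> card (carrier \<Delta>)"
    by (rule lower_bound[OF D(1) D(2) D(4) _ ml]) (use D(5) in \<open>simp add: S_def\<close>)
  then have "F l \<le> Least ?Q" using Fl D(3) by simp
  then show ?thesis unfolding full_rf_growth_def .
qed

lemma main_exists:
  fixes F :: "nat \<Rightarrow> nat"
  assumes F: "strict_mono_on {1..} F \<and> (\<forall>n\<ge>1. F n \<ge> 1)"
  shows "\<exists>d r :: nat \<Rightarrow> nat.
           mono_on {1..} d \<and>
           (\<forall>n\<ge>1. Factorial_Ring.prime (d n) \<and> d n \<ge> 5) \<and>
           (\<forall>n\<ge>1. d n \<ge> 2 * r n + 1 \<and> r n \<ge> n \<and> d n - 2 * r n \<ge> n \<and> 3 * r n \<le> d n) \<and>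
           strict_mono_on {1..} r \<and>
           (\<forall>n\<ge>16. full_rf_growth (G_grp d r) {alpha_el d, beta_el r} n \<ge> F n)"
proof -
    have h1: "mono_on {1..} (dd F)"
      by (rule mono_onI) (use lift_Suc_mono_le[of "dd F", OF dd_mono_all] in auto)
    have h2: "\<forall>n\<ge>1. Factorial_Ring.prime (dd F n) \<and> dd F n \<ge> 5"
    proof (intro allI impI conjI)
      fix n :: nat assume n: "n \<ge> 1"
      show "Factorial_Ring.prime (dd F n)" by (rule dd_prime[OF n])
      show "dd F n \<ge> 5" using dd_ge11[OF n, of F] by simp
    qed
    have h3: "\<forall>n\<ge>1. dd F n \<ge> 2 * rr F n + 1 \<and> rr F n \<ge> n \<and> dd F n - 2 * rr F n \<ge> n \<and> 3 * rr F n \<le> dd F n"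
    proof (intro allI impI conjI)
      fix n :: nat assume n: "n \<ge> 1"
      have a: "rr F n < rr F (Suc n)" using rr_strict[OF n, of "Suc n" F] by simp
      have b: "3 * rr F (Suc n) + 11 \<le> dd F n" by (rule rr_dd[OF n])
      have c: "rr F n \<ge> n" by (rule rr_ge[OF n])
      show "dd F n \<ge> 2 * rr F n + 1" using a b by simp
      show "rr F n \<ge> n" by (rule c)
      show "dd F n - 2 * rr F n \<ge> n" using a b c by simp
      show "3 * rr F n \<le> dd F n" using a b by simp
    qed
    have h4: "strict_mono_on {1..} (rr F)"
      by (rule strict_mono_onI) (use rr_strict in auto)
    have h5: "\<forall>n\<ge>16. full_rf_growth (G_grp (dd F) (rr F)) {alpha_el (dd F), beta_el (rr F)} n \<ge> F n"
      using main_bound F by blast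
    show ?thesis
      apply (rule exI[of _ "dd F"])
      apply (rule exI[of _ "rr F"])
      apply (intro conjI)
      apply (rule h1)
      apply (rule h2)
      apply (rule h3)
      apply (rule h4)
      by (rule h5)
  qed

theorem theorem3p14:
  "\<exists>C0::nat. C0 > 0 \<and>
     (\<forall>F :: nat \<Rightarrow> nat. strict_mono_on {1..} F \<and> (\<forall>n\<ge>1. F n \<ge> 1) \<longrightarrow>
        (\<exists>d r :: nat \<Rightarrow> nat.
           mono_on {1..} d \<and>
           (\<forall>n\<ge>1. Factorial_Ring.prime (d n) \<and> d n \<ge> 5) \<and>
           (\<forall>n\<ge>1. d n \<ge> 2 * r n + 1 \<and> r n \<ge> n \<and> d n - 2 * r n \<ge> n \<and> 3 * r n \<le> d n) \<and>
           strict_mono_on {1..} r \<and>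
           (\<forall>n\<ge>C0. full_rf_growth (G_grp d r) {alpha_el d, beta_el r} n \<ge> F n)))"
  apply (rule exI[of _ "16::nat"])
  apply (rule conjI)
   apply simp
  apply (intro allI impI)
  apply (erule main_exists)
  done


end
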